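(* Let $c,\ell,N\in\mathbb{N}_+$ and let the average pooling layer map $w^{i-1}=(w^{i-1}_1,\dots,w^{i-1}_{\ell N})$, $w^{i-1}_m\in\mathbb{R}^c$, to $w^i=(w^i_1,\dots,w^i_N)$ with $w^i_k=\frac{1}{\ell}\sum_{j=1}^{\ell}w^{i-1}_{\ell(k-1)+j}$. Let $\mu=1/\sqrt{\ell}$ and let $T\in\mathbb{S}^c$ be positive definite. Then for all inputs $w^{i-1}_a,w^{i-1}_b$ and every $k=1,\dots,N$, $$-(w^i_{a,k}-w^i_{b,k})^\top T(w^i_{a,k}-w^i_{b,k})+\mu^2\sum_{j=1}^{\ell}\big(w^{i-1}_{a,\ell(k-1)+j}-w^{i-1}_{b,\ell(k-1)+j}\big)^\top T\big(w^{i-1}_{a,\ell(k-1)+j}-w^{i-1}_{b,\ell(k-1)+j}\big)\ge 0.$$ Consequently, with $\underline{w}$ denoting the column-wise stacked vector, the layer satisfies $$\begin{bmatrix}\underline{w}_a^i-\underline{w}_b^i\\ \underline{w}_a^{i-1}-\underline{w}_b^{i-1}\end{bmatrix}^\top\begin{bmatrix}Q & 0\\ 0 & R\end{bmatrix}\begin{bmatrix}\underline{w}_a^i-\underline{w}_b^i\\ \underline{w}_a^{i-1}-\underline{w}_b^{i-1}\end{bmatrix}\ge0$$ for all inputs, with $Q=-\mathrm{blkdiag}(T,\dots,T)$ ($N$ blocks) and $R=\mu^2\mathrm{blkdiag}(T,\dots,T)$ ($\ell N$ blocks).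
   Context: $\mathbb{S}^c$ denotes the real symmetric $c\times c$ matrices. For a sequence $w=(w_1,\dots,w_M)$ of vectors in $\mathbb{R}^c$, the column-wise stacked vector is $\underline{w}=(w_1^\top,\dots,w_M^\top)^\top$. *)

theory Defs
  imports Complex_Main
begin

text \<open>Conventions (0-based indexing). A vector in R^n is a function nat => real,
  only its values at indices < n matter.
  A sequence of M vectors in R^c is w :: nat => nat => real, w m r being the
  r-th component of the m-th vector (m < M, r < c).\<close>

definition qform :: "nat \<Rightarrow> (nat \<Rightarrow> nat \<Rightarrow> real) \<Rightarrow> (nat \<Rightarrow> real) \<Rightarrow> real" where
  "qform n A x = (\<Sum>i<n. \<Sum>j<n. x i * A i j * x j)"

definition sym_mat :: "nat \<Rightarrow> (nat \<Rightarrow> nat \<Rightarrow> real) \<Rightarrow> bool" where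
  "sym_mat n A \<longleftrightarrow> (\<forall>i<n. \<forall>j<n. A i j = A j i)"

definition pos_def :: "nat \<Rightarrow> (nat \<Rightarrow> nat \<Rightarrow> real) \<Rightarrow> bool" where
  "pos_def n A \<longleftrightarrow> sym_mat n A \<and> (\<forall>x. (\<exists>i<n. x i \<noteq> 0) \<longrightarrow> qform n A x > 0)"

definition avgpool :: "nat \<Rightarrow> (nat \<Rightarrow> nat \<Rightarrow> real) \<Rightarrow> nat \<Rightarrow> nat \<Rightarrow> real" where
  "avgpool l w k r = (1 / real l) * (\<Sum>j<l. w (l * k + j) r)"

definition stack :: "nat \<Rightarrow> (nat \<Rightarrow> nat \<Rightarrow> real) \<Rightarrow> nat \<Rightarrow> real" where
  "stack c w i = w (i div c) (i mod c)"

definition blkdiag :: "nat \<Rightarrow> nat \<Rightarrow> (nat \<Rightarrow> nat \<Rightarrow> real) \<Rightarrow> nat \<Rightarrow> nat \<Rightarrow> real" where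
  "blkdiag c n T i j = (if i < n * c \<and> j < n * c \<and> i div c = j div c
                         then T (i mod c) (j mod c) else 0)"

definition blk2 :: "nat \<Rightarrow> (nat \<Rightarrow> nat \<Rightarrow> real) \<Rightarrow> (nat \<Rightarrow> nat \<Rightarrow> real) \<Rightarrow> nat \<Rightarrow> nat \<Rightarrow> real" where
  "blk2 n1 Q R i j = (if i < n1 \<and> j < n1 then Q i j
                      else if n1 \<le> i \<and> n1 \<le> j then R (i - n1) (j - n1) else 0)"

definition vcat :: "nat \<Rightarrow> (nat \<Rightarrow> real) \<Rightarrow> (nat \<Rightarrow> real) \<Rightarrow> nat \<Rightarrow> real" where
  "vcat n1 x y i = (if i < n1 then x i else y (i - n1))"

end

theory Submission
  imports Defs
begin

lemma sum_split_add: fixes a b :: nat shows "(\<Sum>i<a+b. f i) = (\<Sum>i<a. f i) + (\<Sum>i<b. (f (a+i)::real))"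
  by (induction b) (auto simp: add.assoc)

lemma idx_bound: fixes m n c r :: nat assumes "m < n" "r < c" shows "m*c+r < n*c"
proof -
  have "m*c+r < Suc m * c" using assms by simp
  also have "\<dots> \<le> n*c" using assms by (intro mult_right_mono) auto
  finally show ?thesis .
qed

lemma sum_split_mult: fixes n c :: nat shows "(\<Sum>i<n*c. f i) = (\<Sum>m<n. \<Sum>r<c. (f (m*c+r)::real))"
proof (induction n)
  case 0 then show ?case by simp
next
  case (Suc n)
  have "(\<Sum>i<Suc n*c. f i) = (\<Sum>i<n*c + c. f i)" by (simp add: add.commute)
  also have "\<dots> = (\<Sum>i<n*c. f i) + (\<Sum>r<c. f (n*c+r))" by (rule sum_split_add)
  finally show ?case using Suc by simp
qed

lemma psd: assumes "pos_def c T" shows "qform c T x \<ge> 0"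
proof (cases "\<exists>i<c. x i \<noteq> 0")
  case True then show ?thesis using assms unfolding pos_def_def by force
next
  case False then show ?thesis unfolding qform_def by simp
qed

lemma convex_q:
  fixes d :: "nat \<Rightarrow> nat \<Rightarrow> real"
  assumes "pos_def c T" and "l > 0"
  defines "m \<equiv> (\<lambda>r. (1 / real l) * (\<Sum>j<l. d j r))"
  shows "real l * qform c T m \<le> (\<Sum>j<l. qform c T (d j))"
proof -
  have sm: "(\<Sum>j<l. d j r) = real l * m r" for r using assms(2) unfolding m_def by simp
  have pt: "(\<Sum>j<l. (d j r - m r) * T r s * (d j s - m s))
          = (\<Sum>j<l. d j r * T r s * d j s) - real l * (m r * T r s * m s)" for r s
  proof -
    have "(\<Sum>j<l. (d j r - m r) * T r s * (d j s - m s))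
       = (\<Sum>j<l. d j r * T r s * d j s) - (\<Sum>j<l. d j r) * T r s * m s
         - m r * T r s * (\<Sum>j<l. d j s) + real l * (m r * T r s * m s)"
      by (simp add: algebra_simps sum.distrib sum_subtractf sum_distrib_left sum_distrib_right)
    then show ?thesis by (simp add: sm algebra_simps)
  qed
  have "0 \<le> (\<Sum>j<l. qform c T (\<lambda>r. d j r - m r))"
    by (rule sum_nonneg) (rule psd[OF assms(1)])
  also have "\<dots> = (\<Sum>r<c. \<Sum>s<c. \<Sum>j<l. (d j r - m r) * T r s * (d j s - m s))"
    unfolding qform_def
    by (subst sum.swap) (simp add: sum.swap[of _ "{..<l}"])
  also have "\<dots> = (\<Sum>r<c. \<Sum>s<c. (\<Sum>j<l. d j r * T r s * d j s) - real l * (m r * T r s * m s))"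
    by (simp add: pt)
  also have "\<dots> = (\<Sum>j<l. qform c T (d j)) - real l * qform c T m"
    unfolding qform_def
    by (simp add: sum_subtractf sum_distrib_left sum.swap[of _ "{..<l}"])
  finally show ?thesis by simp
qed

lemma qform_blk2:
  "qform (n1+n2) (blk2 n1 Q R) (vcat n1 x y) = qform n1 Q x + qform n2 R y"
  unfolding qform_def
  by (simp add: sum_split_add sum.distrib blk2_def vcat_def)

lemma qform_blkdiag:
  assumes "c > 0"
  shows "qform (n*c) (\<lambda>i j. a * blkdiag c n T i j) (stack c w) = a * (\<Sum>m<n. qform c T (w m))"
proof -
  have "qform (n*c) (\<lambda>i j. a * blkdiag c n T i j) (stack c w)
     = (\<Sum>m<n. \<Sum>r<c. \<Sum>m'<n. \<Sum>s<c. w m r * (a * (if m = m' then T r s else 0)) * w m' s)"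
    unfolding qform_def sum_split_mult
  proof (intro sum.cong refl)
    fix m r m' s assume "m \<in> {..<n}" "r \<in> {..<c}" "m' \<in> {..<n}" "s \<in> {..<c}"
    then have b: "m*c+r < n*c" "m'*c+s < n*c"
      using idx_bound by auto
    have d: "(m*c+r) div c = m" "(m*c+r) mod c = r" "(m'*c+s) div c = m'" "(m'*c+s) mod c = s"
      using \<open>r \<in> _\<close> \<open>s \<in> _\<close> by auto
    have "blkdiag c n T (m * c + r) (m' * c + s) = (if m = m' then T r s else 0)"
      using b \<open>r \<in> _\<close> \<open>s \<in> _\<close> by (simp add: blkdiag_def d)
    moreover have "stack c w (m * c + r) = w m r" "stack c w (m' * c + s) = w m' s"
      using \<open>r \<in> _\<close> \<open>s \<in> _\<close> by (simp_all add: stack_def d)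
    ultimately show "stack c w (m * c + r) * (a * blkdiag c n T (m * c + r) (m' * c + s)) * stack c w (m' * c + s)
      = w m r * (a * (if m = m' then T r s else 0)) * w m' s"
      by simp
  qed
  also have "\<dots> = (\<Sum>m<n. \<Sum>r<c. \<Sum>s<c. w m r * (a * T r s) * w m s)"
  proof (rule sum.cong[OF refl], rule sum.cong[OF refl])
    fix m r assume mr: "m \<in> {..<n}" and "r \<in> {..<c}"
    have e: "w m r * (a * (if m = m' then T r s else 0)) * w m' s
       = (if m' = m then w m r * (a * T r s) * w m s else 0)" for m' s by simp
    have "(\<Sum>m'<n. \<Sum>s<c. w m r * (a * (if m = m' then T r s else 0)) * w m' s)
       = (\<Sum>s<c. \<Sum>m'<n. w m r * (a * (if m = m' then T r s else 0)) * w m' s)"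
      by (rule sum.swap)
    also have "\<dots> = (\<Sum>s<c. w m r * (a * T r s) * w m s)"
      unfolding e using mr by simp
    finally show "(\<Sum>m'<n. \<Sum>s<c. w m r * (a * (if m = m' then T r s else 0)) * w m' s)
       = (\<Sum>s<c. w m r * (a * T r s) * w m s)" .
  qed
  also have "\<dots> = a * (\<Sum>m<n. qform c T (w m))"
    unfolding qform_def by (simp add: sum_distrib_left algebra_simps)
  finally show ?thesis .
qed

theorem lemma8:
  fixes c l N :: nat and T :: "nat \<Rightarrow> nat \<Rightarrow> real"
    and wa wb :: "nat \<Rightarrow> nat \<Rightarrow> real"
  assumes "c > 0" and "l > 0" and "N > 0"
    and "pos_def c T"
  shows "(\<forall>k<N.
            - qform c T (\<lambda>r. avgpool l wa k r - avgpool l wb k r)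
            + (1 / sqrt (real l))\<^sup>2 *
                (\<Sum>j<l. qform c T (\<lambda>r. wa (l * k + j) r - wb (l * k + j) r)) \<ge> 0)
       \<and> qform (N * c + l * N * c)
           (blk2 (N * c) (\<lambda>i j. - blkdiag c N T i j)
                         (\<lambda>i j. (1 / sqrt (real l))\<^sup>2 * blkdiag c (l * N) T i j))
           (vcat (N * c)
              (\<lambda>i. stack c (avgpool l wa) i - stack c (avgpool l wb) i)
              (\<lambda>i. stack c wa i - stack c wb i)) \<ge> 0"
proof -
  have sq: "(1 / sqrt (real l))\<^sup>2 = 1 / real l" using assms(2)
    by (simp add: power_divide)
  define E where "E k = - qform c T (\<lambda>r. avgpool l wa k r - avgpool l wb k r)
            + (1 / sqrt (real l))\<^sup>2 *
                (\<Sum>j<l. qform c T (\<lambda>r. wa (l * k + j) r - wb (l * k + j) r))" for k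
  have part1: "E k \<ge> 0" for k
  proof -
    have av: "(\<lambda>r. avgpool l wa k r - avgpool l wb k r)
      = (\<lambda>r. (1 / real l) * (\<Sum>j<l. wa (l * k + j) r - wb (l * k + j) r))"
      by (rule ext) (simp add: avgpool_def sum_subtractf right_diff_distrib)
    have "real l * qform c T (\<lambda>r. avgpool l wa k r - avgpool l wb k r)
      \<le> (\<Sum>j<l. qform c T (\<lambda>r. wa (l * k + j) r - wb (l * k + j) r))"
      unfolding av by (rule convex_q[OF assms(4) assms(2)])
    then show ?thesis unfolding E_def sq using assms(2)
      by (simp add: field_simps)
  qed
  have st: "(\<lambda>i. stack c u i - stack c v i) = stack c (\<lambda>m r. u m r - v m r)" for u v
    by (rule ext) (simp add: stack_def)
  have bl: "(\<lambda>i j. - blkdiag c N T i j) = (\<lambda>i j. (-1) * blkdiag c N T i j)" by simp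
  have "qform (N * c + l * N * c)
           (blk2 (N * c) (\<lambda>i j. - blkdiag c N T i j)
                         (\<lambda>i j. (1 / sqrt (real l))\<^sup>2 * blkdiag c (l * N) T i j))
           (vcat (N * c)
              (\<lambda>i. stack c (avgpool l wa) i - stack c (avgpool l wb) i)
              (\<lambda>i. stack c wa i - stack c wb i))
     = (-1) * (\<Sum>k<N. qform c T (\<lambda>r. avgpool l wa k r - avgpool l wb k r))
       + (1 / sqrt (real l))\<^sup>2 * (\<Sum>m<l*N. qform c T (\<lambda>r. wa m r - wb m r))"
    unfolding qform_blk2 st bl qform_blkdiag[OF assms(1)] by simp
  also have "(\<Sum>m<l*N. qform c T (\<lambda>r. wa m r - wb m r))
      = (\<Sum>k<N. \<Sum>j<l. qform c T (\<lambda>r. wa (l*k+j) r - wb (l*k+j) r))"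
    by (subst mult.commute) (simp add: sum_split_mult mult.commute)
  also have "(-1) * (\<Sum>k<N. qform c T (\<lambda>r. avgpool l wa k r - avgpool l wb k r))
       + (1 / sqrt (real l))\<^sup>2 * (\<Sum>k<N. \<Sum>j<l. qform c T (\<lambda>r. wa (l*k+j) r - wb (l*k+j) r))
     = (\<Sum>k<N. E k)"
    unfolding E_def by (simp only: sum.distrib sum_negf sum_distrib_left mult_minus1)
  finally have "qform (N * c + l * N * c)
           (blk2 (N * c) (\<lambda>i j. - blkdiag c N T i j)
                         (\<lambda>i j. (1 / sqrt (real l))\<^sup>2 * blkdiag c (l * N) T i j))
           (vcat (N * c)
              (\<lambda>i. stack c (avgpool l wa) i - stack c (avgpool l wb) i)
              (\<lambda>i. stack c wa i - stack c wb i)) = (\<Sum>k<N. E k)" .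
  moreover have "(\<Sum>k<N. E k) \<ge> 0" by (rule sum_nonneg) (rule part1)
  ultimately show ?thesis using part1 unfolding E_def by simp
qed

end
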